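(* Let $\mathcal{H}\subseteq\{0,1\}^{\mathcal{X}}$ with $|\mathcal{H}|>2$. For any learning algorithm $\hat h_n$ there exists a realizable distribution $P$ such that $\mathbf{E}[\mathrm{er}_P(\hat h_n)]\ge 2^{-n-2}$ for infinitely many $n$. In particular, $\mathcal{H}$ is not learnable at rate faster than $e^{-n}$.
   Context: $\mathrm{er}_P(h)=P\{(x,y):h(x)\ne y\}$ for a distribution $P$ on $\mathcal{X}\times\{0,1\}$; $P$ is realizable if $\inf_{h\in\mathcal{H}}\mathrm{er}_P(h)=0$. A learning algorithm is a sequence of (universally measurable) maps $H_n:(\mathcal{X}\times\{0,1\})^n\times\mathcal{X}\to\{0,1\}$ with $\hat h_n(x)=H_n((X_1,Y_1),\ldots,(X_n,Y_n),x)$ for i.i.d. $(X_i,Y_i)\sim P$. "Not learnable at rate faster than $R$" means that for every learning algorithm there exist a realizable $P$ and $C,c>0$ with $\mathbf{E}[\mathrm{er}_P(\hat h_n)]\ge CR(cn)$ for infinitely many $n$. *)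

theory Defs
  imports "HOL-Probability.Probability"
begin

text \<open>Instance space: a measurable space M on the type 'a (X = space M).
  Labels: bool, with the discrete sigma-algebra.\<close>

definition univ_measurable :: "'a measure \<Rightarrow> 'b measure \<Rightarrow> ('a \<Rightarrow> 'b) \<Rightarrow> bool" where
  "univ_measurable M N f \<longleftrightarrow>
     (\<forall>\<mu>. sets \<mu> = sets M \<and> prob_space \<mu> \<longrightarrow> f \<in> measurable (completion \<mu>) N)"

definition is_distribution :: "'a measure \<Rightarrow> ('a \<times> bool) measure \<Rightarrow> bool" where
  "is_distribution M P \<longleftrightarrow> prob_space P \<and> sets P = sets (M \<Otimes>\<^sub>M count_space UNIV)"

text \<open>Error rate er_P(h) = P{(x,y). h x \<noteq> y} (w.r.t. the completion of P, so that
  it makes sense for universally measurable h).\<close>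
definition er :: "('a \<times> bool) measure \<Rightarrow> ('a \<Rightarrow> bool) \<Rightarrow> real" where
  "er P h = measure (completion P) {z \<in> space P. h (fst z) \<noteq> snd z}"

definition realizable :: "('a \<Rightarrow> bool) set \<Rightarrow> ('a \<times> bool) measure \<Rightarrow> bool" where
  "realizable H P \<longleftrightarrow> (INF h\<in>H. er P h) = 0"

text \<open>A learning algorithm: for each n a universally measurable map
  H_n : (X x {0,1})^n x X \<rightarrow> {0,1}; samples are functions on {..<n}.\<close>
definition learning_algorithm ::
    "'a measure \<Rightarrow> (nat \<Rightarrow> (nat \<Rightarrow> 'a \<times> bool) \<Rightarrow> 'a \<Rightarrow> bool) \<Rightarrow> bool" where
  "learning_algorithm M A \<longleftrightarrow>
     (\<forall>n. univ_measurable
            (PiM {..<n} (\<lambda>_. M \<Otimes>\<^sub>M count_space UNIV) \<Otimes>\<^sub>M M)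
            (count_space UNIV) (\<lambda>(S, x). A n S x))"

definition expected_error ::
    "('a \<times> bool) measure \<Rightarrow> (nat \<Rightarrow> (nat \<Rightarrow> 'a \<times> bool) \<Rightarrow> 'a \<Rightarrow> bool) \<Rightarrow> nat \<Rightarrow> real" where
  "expected_error P A n =
     (\<integral>S. er P (A n S) \<partial>(completion (PiM {..<n} (\<lambda>_. P))))"

definition not_learnable_faster ::
    "'a measure \<Rightarrow> ('a \<Rightarrow> bool) set \<Rightarrow> (real \<Rightarrow> real) \<Rightarrow> bool" where
  "not_learnable_faster M H R \<longleftrightarrow>
     (\<forall>A. learning_algorithm M A \<longrightarrow>
        (\<exists>P. is_distribution M P \<and> realizable H P \<and>
           (\<exists>C>0. \<exists>c>0. \<exists>\<^sub>\<infinity>n. expected_error P A n \<ge> C * R (c * real n))))"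

end

theory Submission
  imports Defs
begin


lemma dirac_completion:
  assumes "B \<in> sets (completion (return K p))" "p \<in> space K"
  shows "\<exists>G\<in>sets K. p \<in> G \<and> (G \<subseteq> B \<or> G \<inter> B = {})"
proof -
  obtain S N N' where B: "B = S \<union> N" "N \<subseteq> N'" "N' \<in> null_sets (return K p)" "S \<in> sets (return K p)"
    using sets_completionE[OF assms(1)] by metis
  have "p \<notin> N'" using B(3) assms(2) by (auto simp: null_sets_def emeasure_return)
  show ?thesis
  proof (cases "p \<in> S")
    case True thus ?thesis using B by (intro bexI[of _ S]) auto
  next
    case False
    have "space K - S - N' \<in> sets K" using B by auto
    thus ?thesis using False \<open>p\<notin>N'\<close> assms(2) B by (intro bexI[of _ "space K - S - N'"]) auto
  qed
qed

lemma univ_loc_const: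
  assumes um: "univ_measurable (K1 \<Otimes>\<^sub>M M) (count_space UNIV) (\<lambda>(S,x). F S x)"
   and S: "S \<in> space K1" and z: "z \<in> space M"
  shows "\<exists>U\<in>sets M. z \<in> U \<and> (\<forall>w\<in>U. F S w = F S z)"
proof -
  let ?K = "K1 \<Otimes>\<^sub>M M"
  have p: "(S,z) \<in> space ?K" using S z by (simp add: space_pair_measure)
  have "prob_space (return ?K (S,z))" using p by (rule prob_space_return)
  then have m: "(\<lambda>(S,x). F S x) \<in> completion (return ?K (S,z)) \<rightarrow>\<^sub>M count_space UNIV"
    using um unfolding univ_measurable_def by auto
  let ?B = "(\<lambda>(S,x). F S x) -` {F S z} \<inter> space (completion (return ?K (S,z)))"
  have "?B \<in> sets (completion (return ?K (S,z)))" using m by (rule measurable_sets) auto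
  from dirac_completion[OF this p] obtain G where G: "G \<in> sets ?K" "(S,z)\<in>G" "G \<subseteq> ?B \<or> G \<inter> ?B = {}" by auto
  have "(S,z) \<in> ?B" using p by simp
  hence GB: "G \<subseteq> ?B" using G by auto
  have U: "Pair S -` G \<in> sets M" using G(1) by (rule sets_Pair1)
  show ?thesis using GB G(2) z by (intro bexI[OF _ U]) auto
qed

lemma distr_pair_return:
  assumes Q: "prob_space Q" and z: "z \<in> space M"
  shows "distr Q (Q \<Otimes>\<^sub>M return M z) (\<lambda>S. (S,z)) = Q \<Otimes>\<^sub>M return M z"
proof (rule measure_eqI)
  show "sets (distr Q (Q \<Otimes>\<^sub>M return M z) (\<lambda>S. (S,z))) = sets (Q \<Otimes>\<^sub>M return M z)" by simp
  fix Z assume "Z \<in> sets (distr Q (Q \<Otimes>\<^sub>M return M z) (\<lambda>S. (S,z)))"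
  hence Z: "Z \<in> sets (Q \<Otimes>\<^sub>M return M z)" by simp
  interpret R: prob_space "return M z" using z by (rule prob_space_return)
  have f: "(\<lambda>S. (S,z)) \<in> Q \<rightarrow>\<^sub>M Q \<Otimes>\<^sub>M return M z" using z by (intro measurable_Pair2') simp
  have "emeasure (Q \<Otimes>\<^sub>M return M z) Z = (\<integral>\<^sup>+s. emeasure (return M z) (Pair s -` Z) \<partial>Q)"
    using Z by (rule R.emeasure_pair_measure_alt)
  also have "\<dots> = (\<integral>\<^sup>+s. indicator ((\<lambda>S. (S,z)) -` Z \<inter> space Q) s \<partial>Q)"
  proof (rule nn_integral_cong)
    fix s assume "s \<in> space Q"
    have "Pair s -` Z \<in> sets M" using Z sets_Pair1 by (metis sets_return)
    then show "emeasure (return M z) (Pair s -` Z) = indicator ((\<lambda>S. (S,z)) -` Z \<inter> space Q) s"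
      using \<open>s \<in> space Q\<close> by (simp add: emeasure_return indicator_def)
  qed
  also have "\<dots> = emeasure Q ((\<lambda>S. (S,z)) -` Z \<inter> space Q)"
    using measurable_sets[OF f Z] by simp
  also have "\<dots> = emeasure (distr Q (Q \<Otimes>\<^sub>M return M z) (\<lambda>S. (S,z))) Z"
    using f Z by (simp add: emeasure_distr)
  finally show "emeasure (distr Q (Q \<Otimes>\<^sub>M return M z) (\<lambda>S. (S,z))) Z = emeasure (Q \<Otimes>\<^sub>M return M z) Z" by simp
qed

lemma univ_meas_slice:
  assumes um: "univ_measurable (K1 \<Otimes>\<^sub>M M) (count_space UNIV) (\<lambda>(S,x). F S x)"
   and Q: "prob_space Q" "sets Q = sets K1" and z: "z \<in> space M"
  shows "(\<lambda>S. F S z) \<in> completion Q \<rightarrow>\<^sub>M count_space UNIV"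
proof -
  let ?mu = "Q \<Otimes>\<^sub>M return M z"
  have pmu: "prob_space ?mu" using Q(1) prob_space_return[OF z] by (rule prob_space_pair)
  have smu: "sets ?mu = sets (K1 \<Otimes>\<^sub>M M)" using Q by (intro sets_pair_measure_cong) auto
  have m: "(\<lambda>(S,x). F S x) \<in> completion ?mu \<rightarrow>\<^sub>M count_space UNIV"
    using um pmu smu unfolding univ_measurable_def by auto
  have f: "(\<lambda>S. (S,z)) \<in> Q \<rightarrow>\<^sub>M ?mu" using z by (intro measurable_Pair2') simp
  have "(\<lambda>S. (S,z)) \<in> completion Q \<rightarrow>\<^sub>M completion ?mu"
  proof (rule completion.measurable_completion2)
    show "(\<lambda>S. (S,z)) \<in> completion Q \<rightarrow>\<^sub>M ?mu" using f by (rule measurable_completion)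
    show "null_sets ?mu \<subseteq> null_sets (distr (completion Q) ?mu (\<lambda>S. (S,z)))"
      using distr_completion[OF f] distr_pair_return[OF Q(1) z] by simp
  qed
  from measurable_comp[OF this m] show ?thesis by (simp add: comp_def)
qed



definition twopt :: "('b) measure \<Rightarrow> 'b \<Rightarrow> 'b \<Rightarrow> 'b measure" where
  "twopt N a b = distr (measure_pmf (pmf_of_set {a,b})) N (\<lambda>z. if z \<in> space N then z else a)"

lemma twopt_sets[simp]: "sets (twopt N a b) = sets N"
  by (simp add: twopt_def)

lemma twopt_space[simp]: "space (twopt N a b) = space N"
  by (simp add: twopt_def)

lemma twopt_prob: assumes "a \<in> space N" shows "prob_space (twopt N a b)"
  unfolding twopt_def using assms by (intro prob_space.prob_space_distr) (auto simp: measure_pmf.prob_space_axioms)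

lemma twopt_emeasure:
  assumes "a \<in> space N" "b \<in> space N" "a \<noteq> b" "Q \<in> sets N"
  shows "emeasure (twopt N a b) Q = ennreal ((if a \<in> Q then 1/2 else 0) + (if b \<in> Q then 1/2 else 0))"
proof -
  let ?f = "\<lambda>z. if z \<in> space N then z else a"
  have f: "?f \<in> measure_pmf (pmf_of_set {a,b}) \<rightarrow>\<^sub>M N" using assms by auto
  have "emeasure (twopt N a b) Q = emeasure (measure_pmf (pmf_of_set {a,b})) (?f -` Q)"
    unfolding twopt_def using f assms by (simp add: emeasure_distr)
  also have "\<dots> = card ({a,b} \<inter> ?f -` Q) / card {a,b}"
    by (rule emeasure_pmf_of_set) auto
  also have "{a,b} \<inter> ?f -` Q = {a,b} \<inter> Q" using assms(1,2) by auto
  finally show ?thesis using assms(3)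
    by (cases "a \<in> Q"; cases "b \<in> Q") (simp_all add: divide_ennreal ennreal_of_nat_eq_real_of_nat Int_insert_left)
qed

lemma twopt_measure:
  assumes "a \<in> space N" "b \<in> space N" "a \<noteq> b" "Q \<in> sets N"
  shows "measure (twopt N a b) Q = (if a \<in> Q then 1/2 else 0) + (if b \<in> Q then 1/2 else 0)"
  using twopt_emeasure[OF assms] by (simp add: measure_def)



lemma er_twopt:
  fixes M :: "'a measure"
  defines "N \<equiv> M \<Otimes>\<^sub>M count_space (UNIV::bool set)"
  assumes x: "x \<in> space M" and x': "x' \<in> space M" and xx: "x \<noteq> x'"
    and U0: "U0 \<in> sets M" "x \<in> U0" "\<forall>w\<in>U0. g w = g x"
    and U1: "U1 \<in> sets M" "x' \<in> U1" "\<forall>w\<in>U1. g w = g x'"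
  shows "er (twopt N (x,y) (x',y')) g = (if g x \<noteq> y then 1/2 else 0) + (if g x' \<noteq> y' then 1/2 else 0)"
proof -
  let ?P = "twopt N (x,y) (x',y')"
  have a: "(x,y) \<in> space N" and b: "(x',y') \<in> space N" using x x' by (auto simp: N_def space_pair_measure)
  have ab: "(x,y) \<noteq> (x',y')" using xx by auto
  let ?B = "{z \<in> space ?P. g (fst z) \<noteq> snd z}"
  define V0 where "V0 = U0 \<times> {y}"
  define V1 where "V1 = U1 \<times> {y'}"
  have V0: "V0 \<in> sets N" unfolding V0_def N_def using U0 by (intro pair_measureI) auto
  have V1: "V1 \<in> sets N" unfolding V1_def N_def using U1 by (intro pair_measureI) auto
  define C where "C = (if g x \<noteq> y then V0 else {}) \<union> (if g x' \<noteq> y' then V1 else {})"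
  define W where "W = space N - V0 - V1"
  have C: "C \<in> sets N" using V0 V1 unfolding C_def by auto
  have W: "W \<in> sets N" using V0 V1 unfolding W_def by auto
  have CB: "C \<subseteq> ?B"
  proof
    fix z assume z: "z \<in> C"
    obtain w t where zw: "z = (w,t)" by force
    show "z \<in> ?B"
    proof (cases "g x \<noteq> y \<and> z \<in> V0")
      case True
      then have "w \<in> U0" "t = y" using zw unfolding V0_def by auto
      then have "g w = g x" "w \<in> space M" using U0(3) sets.sets_into_space[OF U0(1)] by auto
      then show ?thesis using True zw \<open>t = y\<close> by (simp add: N_def space_pair_measure)
    next
      case False
      then have "g x' \<noteq> y' \<and> z \<in> V1" using z unfolding C_def by (auto split: if_splits)
      then have "w \<in> U1" "t = y'" "g x' \<noteq> y'" using zw unfolding V1_def by auto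
      then have "g w = g x'" "w \<in> space M" using U1(3) sets.sets_into_space[OF U1(1)] by auto
      then show ?thesis using \<open>g x' \<noteq> y'\<close> zw \<open>t = y'\<close> by (simp add: N_def space_pair_measure)
    qed
  qed
  have BC: "?B - C \<subseteq> W"
  proof
    fix z assume z: "z \<in> ?B - C"
    obtain w t where zw: "z = (w,t)" by force
    have sp: "z \<in> space N" and gz: "g w \<noteq> t" using z zw by auto
    have "z \<notin> V0"
    proof
      assume "z \<in> V0"
      then have "w \<in> U0" "t = y" using zw unfolding V0_def by auto
      then have "g x \<noteq> y" using gz U0(3) by metis
      then show False using z \<open>z \<in> V0\<close> unfolding C_def by auto
    qed
    moreover have "z \<notin> V1"
    proof
      assume "z \<in> V1"
      then have "w \<in> U1" "t = y'" using zw unfolding V1_def by auto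
      then have "g x' \<noteq> y'" using gz U1(3) by metis
      then show False using z \<open>z \<in> V1\<close> unfolding C_def by auto
    qed
    ultimately show "z \<in> W" using sp unfolding W_def by blast
  qed
  have Wnull: "W \<in> null_sets ?P"
  proof -
    have "(x,y) \<notin> W" "(x',y') \<notin> W" using U0(2) U1(2) unfolding W_def V0_def V1_def by auto
    then have "emeasure ?P W = 0" using twopt_emeasure[OF a b ab W] by simp
    then show ?thesis using W by (auto simp: null_sets_def)
  qed
  have BCnull: "?B - C \<in> null_sets (completion ?P)"
    by (rule null_sets_completion_subset[OF BC]) (rule null_sets_completionI[OF Wnull])
  have eqB: "?B = C \<union> (?B - C)" using CB by blast
  have "measure (completion ?P) (C \<union> (?B - C)) = measure (completion ?P) C"
    by (rule measure_Un_null_set) (use C BCnull in simp_all)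
  then have "measure (completion ?P) ?B = measure (completion ?P) C" by (simp only: eqB[symmetric])
  also have "\<dots> = measure ?P C" using C by simp
  also have "\<dots> = (if (x,y) \<in> C then 1/2 else 0) + (if (x',y') \<in> C then 1/2 else 0)"
    by (rule twopt_measure[OF a b ab C])
  also have "(x,y) \<in> C \<longleftrightarrow> g x \<noteq> y"
  proof
    assume "(x,y) \<in> C"
    then have "(x,y) \<in> ?B" using CB by blast
    then show "g x \<noteq> y" by simp
  next
    assume "g x \<noteq> y" then show "(x,y) \<in> C" using U0(2) unfolding C_def V0_def by simp
  qed
  also have "(x',y') \<in> C \<longleftrightarrow> g x' \<noteq> y'"
  proof
    assume "(x',y') \<in> C"
    then have "(x',y') \<in> ?B" using CB by blast
    then show "g x' \<noteq> y'" by simp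
  next
    assume "g x' \<noteq> y'" then show "(x',y') \<in> C" using U1(2) unfolding C_def V1_def by simp
  qed
  finally show ?thesis unfolding er_def .
qed



definition LB :: "'b measure \<Rightarrow> 'b \<Rightarrow> real \<Rightarrow> bool" where
  "LB K p c \<longleftrightarrow> (\<forall>Q\<in>sets K. p \<in> Q \<longrightarrow> ennreal c \<le> emeasure K Q)"

lemma LB_pair:
  assumes L1: "LB M1 p1 a" and L2: "LB M2 p2 b" and sf: "sigma_finite_measure M2"
    and p2: "p2 \<in> space M2" and ab: "0 \<le> a" "0 \<le> b"
  shows "LB (M1 \<Otimes>\<^sub>M M2) (p1,p2) (a*b)"
  unfolding LB_def
proof (intro ballI impI)
  fix Z assume Z: "Z \<in> sets (M1 \<Otimes>\<^sub>M M2)" and pZ: "(p1,p2) \<in> Z"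
  interpret sigma_finite_measure M2 by fact
  let ?E = "(\<lambda>s. (s,p2)) -` Z \<inter> space M1"
  have f: "(\<lambda>s. (s,p2)) \<in> M1 \<rightarrow>\<^sub>M M1 \<Otimes>\<^sub>M M2" using p2 by (rule measurable_Pair2')
  have E: "?E \<in> sets M1" using measurable_sets[OF f Z] .
  have p1: "p1 \<in> space M1" using sets.sets_into_space[OF Z] pZ by (auto simp: space_pair_measure)
  have "ennreal (a*b) = ennreal b * ennreal a" using ab by (simp add: ennreal_mult mult.commute)
  also have "\<dots> \<le> ennreal b * emeasure M1 ?E"
    using L1 E pZ p1 unfolding LB_def by (intro mult_left_mono) auto
  also have "\<dots> = (\<integral>\<^sup>+s. ennreal b * indicator ?E s \<partial>M1)"
    using E by (simp add: nn_integral_cmult_indicator)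
  also have "\<dots> \<le> (\<integral>\<^sup>+s. emeasure M2 (Pair s -` Z) \<partial>M1)"
  proof (rule nn_integral_mono)
    fix s assume "s \<in> space M1"
    show "ennreal b * indicator ?E s \<le> emeasure M2 (Pair s -` Z)"
    proof (cases "s \<in> ?E")
      case True
      then have "p2 \<in> Pair s -` Z" by simp
      moreover have "Pair s -` Z \<in> sets M2" using Z by (rule sets_Pair1)
      ultimately have "ennreal b \<le> emeasure M2 (Pair s -` Z)" using L2 unfolding LB_def by blast
      then show ?thesis using True by simp
    qed simp
  qed
  also have "\<dots> = emeasure (M1 \<Otimes>\<^sub>M M2) Z" using Z by (rule emeasure_pair_measure_alt[symmetric])
  finally show "ennreal (a*b) \<le> emeasure (M1 \<Otimes>\<^sub>M M2) Z" .
qed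

lemma LB_PiM:
  assumes P: "prob_space P" and L: "LB P a (1/2)" and a: "a \<in> space P"
  shows "LB (PiM {..<n} (\<lambda>_. P)) (\<lambda>i\<in>{..<n}. a) ((1/2)^n)"
proof (induction n)
  case 0
  show ?case unfolding LB_def
  proof (intro ballI impI)
    fix Q assume Q: "Q \<in> sets (PiM {..<0::nat} (\<lambda>_. P))" "(\<lambda>i\<in>{..<0::nat}. a) \<in> Q"
    interpret prob_space "PiM {..<0::nat} (\<lambda>_. P)" using P by (intro prob_space_PiM) auto
    have "Q = space (PiM {..<0::nat} (\<lambda>_. P))" using sets.sets_into_space[OF Q(1)] Q(2) by (auto simp: space_PiM_empty)
    then show "ennreal ((1/2)^0) \<le> emeasure (PiM {..<0::nat} (\<lambda>_. P)) Q" using emeasure_space_1 by simp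
  qed
next
  case (Suc n)
  let ?Pn = "PiM {..<n} (\<lambda>_. P)"
  let ?g = "\<lambda>(x, X). X(n := x)"
  have eq: "PiM {..<Suc n} (\<lambda>_. P) = distr (P \<Otimes>\<^sub>M ?Pn) (PiM (insert n {..<n}) (\<lambda>_. P)) ?g"
    using distr_pair_PiM_eq_PiM[of "{..<n}" "\<lambda>_. P" n] P by (simp add: lessThan_Suc)
  have g: "?g \<in> P \<Otimes>\<^sub>M ?Pn \<rightarrow>\<^sub>M PiM (insert n {..<n}) (\<lambda>_. P)" by measurable
  interpret Pn: prob_space ?Pn using P by (intro prob_space_PiM) auto
  have sfPn: "sigma_finite_measure ?Pn" by unfold_locales
  have LP: "LB (P \<Otimes>\<^sub>M ?Pn) (a, \<lambda>i\<in>{..<n}. a) ((1/2) * (1/2)^n)"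
    by (rule LB_pair[OF L Suc.IH sfPn]) (simp_all add: space_PiM PiE_iff extensional_def a)
  show ?case unfolding LB_def
  proof (intro ballI impI)
    fix Q assume Q: "Q \<in> sets (PiM {..<Suc n} (\<lambda>_. P))" "(\<lambda>i\<in>{..<Suc n}. a) \<in> Q"
    have Q': "Q \<in> sets (PiM (insert n {..<n}) (\<lambda>_. P))" using Q(1) by (simp add: lessThan_Suc)
    have pt: "?g (a, \<lambda>i\<in>{..<n}. a) = (\<lambda>i\<in>{..<Suc n}. a)" by (auto simp: fun_eq_iff)
    have inE: "(a, \<lambda>i\<in>{..<n}. a) \<in> ?g -` Q \<inter> space (P \<Otimes>\<^sub>M ?Pn)"
      using Q(2) pt a by (auto simp: space_pair_measure space_PiM)
    have "ennreal ((1/2)^Suc n) \<le> emeasure (P \<Otimes>\<^sub>M ?Pn) (?g -` Q \<inter> space (P \<Otimes>\<^sub>M ?Pn))"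
      using LP measurable_sets[OF g Q'] inE unfolding LB_def by simp
    also have "\<dots> = emeasure (PiM {..<Suc n} (\<lambda>_. P)) Q"
      unfolding eq using g Q' by (simp add: emeasure_distr)
    finally show "ennreal ((1/2)^Suc n) \<le> emeasure (PiM {..<Suc n} (\<lambda>_. P)) Q" .
  qed
qed


lemma pw1: "2 powr (- real n - 2) \<le> (1/2::real)^(Suc n)"
proof -
  have "2 powr (- real n - 2) = 1 / 2 powr (real (n+2))" by (simp add: powr_minus_divide[symmetric] algebra_simps)
  also have "\<dots> = 1 / 2^(n+2)" by (simp only: powr_realpow[of 2 "n+2", simplified zero_less_numeral])
  also have "\<dots> = (1/2)^(n+2)" by (simp add: power_one_over)
  also have "\<dots> \<le> (1/2)^(Suc n)" by (rule power_decreasing) auto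
  finally show ?thesis .
qed
lemma pw2: "1/4 * exp (- (ln 2 * real n)) = 2 powr (- real n - 2)"
proof -
  have "exp (- (ln 2 * real n)) = 2 powr (- real n)" by (simp add: powr_def)
  moreover have "2 powr (- real n - 2) = 2 powr (- real n) / 2 powr 2" by (rule powr_diff)
  ultimately show ?thesis by simp
qed
lemma three: assumes "infinite (H::'b set) \<or> card H > 2"
  shows "\<exists>a\<in>H. \<exists>b\<in>H. \<exists>c\<in>H. a \<noteq> b \<and> a \<noteq> c \<and> b \<noteq> c"
proof -
  obtain T where T: "T \<subseteq> H" "card T = 3"
  proof (cases "finite H")
    case True
    then have "3 \<le> card H" using assms by auto
    then show ?thesis using obtain_subset_with_card_n that by metis
  next
    case False
    then show ?thesis using infinite_arbitrarily_large that by metis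
  qed
  then show ?thesis by (auto simp: card_3_iff)
qed


lemma main_lower:
  fixes M :: "'a measure"
  defines "N \<equiv> M \<Otimes>\<^sub>M count_space (UNIV::bool set)"
  assumes lm: "learning_algorithm M A" and x: "x\<in>space M" and x': "x'\<in>space M" and xx: "x\<noteq>x'"
    and hyp: "A n (\<lambda>i\<in>{..<n}. (x,y)) x' \<noteq> y'"
  shows "(1/2)^(Suc n) \<le> expected_error (twopt N (x,y) (x',y')) A n"
proof -
  let ?P = "twopt N (x,y) (x',y')"
  let ?Pn = "PiM {..<n} (\<lambda>_. ?P)"
  let ?K1 = "PiM {..<n} (\<lambda>_. N)"
  have a: "(x,y) \<in> space N" and b: "(x',y') \<in> space N" using x x' by (auto simp: N_def space_pair_measure)
  have ab: "(x,y) \<noteq> (x',y')" using xx by auto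
  have um: "univ_measurable (?K1 \<Otimes>\<^sub>M M) (count_space UNIV) (\<lambda>(S,z). A n S z)"
    using lm unfolding learning_algorithm_def N_def by blast
  have Pprob: "prob_space ?P" using a by (rule twopt_prob)
  interpret Pn: prob_space ?Pn using Pprob by (intro prob_space_PiM) auto
  interpret cPn: prob_space "completion ?Pn" by (rule Pn.prob_space_completion)
  have spPn: "space ?Pn = space ?K1" by (simp add: space_PiM)
  have setsPn: "sets ?Pn = sets ?K1" by (intro sets_PiM_cong) auto
  have er_eq: "er ?P (A n S) = (if A n S x \<noteq> y then 1/2 else 0) + (if A n S x' \<noteq> y' then 1/2 else 0)"
    if S: "S \<in> space ?Pn" for S
  proof -
    have S': "S \<in> space ?K1" using S spPn by simp
    obtain U0 where U0: "U0 \<in> sets M" "x \<in> U0" "\<forall>w\<in>U0. A n S w = A n S x"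
      using univ_loc_const[OF um S' x] by blast
    obtain U1 where U1: "U1 \<in> sets M" "x' \<in> U1" "\<forall>w\<in>U1. A n S w = A n S x'"
      using univ_loc_const[OF um S' x'] by blast
    show ?thesis unfolding N_def by (rule er_twopt[OF x x' xx U0 U1])
  qed
  have meas: "(\<lambda>S. A n S z) \<in> completion ?Pn \<rightarrow>\<^sub>M count_space UNIV" if "z \<in> space M" for z
    by (rule univ_meas_slice[OF um Pn.prob_space_axioms setsPn that])
  define E1 where "E1 = {S \<in> space ?Pn. A n S x \<noteq> y}"
  define E2 where "E2 = {S \<in> space ?Pn. A n S x' \<noteq> y'}"
  have E1: "E1 \<in> sets (completion ?Pn)"
  proof -
    have "E1 = (\<lambda>S. A n S x) -` (UNIV - {y}) \<inter> space (completion ?Pn)" unfolding E1_def by auto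
    also have "\<dots> \<in> sets (completion ?Pn)" by (rule measurable_sets[OF meas[OF x]]) auto
    finally show ?thesis .
  qed
  have E2: "E2 \<in> sets (completion ?Pn)"
  proof -
    have "E2 = (\<lambda>S. A n S x') -` (UNIV - {y'}) \<inter> space (completion ?Pn)" unfolding E2_def by auto
    also have "\<dots> \<in> sets (completion ?Pn)" by (rule measurable_sets[OF meas[OF x']]) auto
    finally show ?thesis .
  qed
  have i1: "integrable (completion ?Pn) (indicator E1 :: _ \<Rightarrow> real)"
    by (intro integrable_real_indicator E1) (simp add: cPn.emeasure_finite less_top[symmetric])
  have i2: "integrable (completion ?Pn) (indicator E2 :: _ \<Rightarrow> real)"
    by (intro integrable_real_indicator E2) (simp add: cPn.emeasure_finite less_top[symmetric])
  have "expected_error ?P A n = (\<integral>S. (1/2 * indicator E1 S + 1/2 * indicator E2 S) \<partial>completion ?Pn)"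
    unfolding expected_error_def
    by (rule Bochner_Integration.integral_cong[OF refl]) (auto simp: er_eq E1_def E2_def indicator_def)
  also have "\<dots> = 1/2 * measure (completion ?Pn) E1 + 1/2 * measure (completion ?Pn) E2"
    using i1 i2 E1 E2 sets.sets_into_space[OF E1] sets.sets_into_space[OF E2]
    by (simp add: Bochner_Integration.integral_add integral_mult_right Int_absorb2)
  finally have ee: "expected_error ?P A n = 1/2 * measure (completion ?Pn) E1 + 1/2 * measure (completion ?Pn) E2" .
  let ?S0 = "\<lambda>i\<in>{..<n}. (x,y)"
  have S0: "?S0 \<in> E2" using hyp a unfolding E2_def by (simp add: space_PiM PiE_iff extensional_def)
  have LBP: "LB ?P (x,y) (1/2)" unfolding LB_def
  proof (intro ballI impI)
    fix Q assume "Q \<in> sets ?P" "(x,y) \<in> Q"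
    then show "ennreal (1/2) \<le> emeasure ?P Q" using twopt_emeasure[OF a b ab, of Q]
      by (auto intro!: ennreal_leI)
  qed
  have LBn: "LB ?Pn ?S0 ((1/2)^n)" by (rule LB_PiM[OF Pprob LBP]) (simp add: a)
  obtain S N' N'' where SN: "E2 = S \<union> N'" "N' \<subseteq> N''" "N'' \<in> null_sets ?Pn" "S \<in> sets ?Pn"
    using sets_completionE[OF E2] by metis
  have "?S0 \<notin> N''"
  proof
    assume "?S0 \<in> N''"
    then have "ennreal ((1/2)^n) \<le> emeasure ?Pn N''" using LBn SN(3) unfolding LB_def by auto
    moreover have "emeasure ?Pn N'' = 0" using SN(3) by (rule null_setsD1)
    moreover have "0 < ennreal ((1/2::real)^n)" by simp
    ultimately show False by simp
  qed
  then have "?S0 \<in> S" using S0 SN by auto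
  then have "ennreal ((1/2)^n) \<le> emeasure ?Pn S" using LBn SN(4) unfolding LB_def by auto
  then have m2: "(1/2)^n \<le> measure ?Pn S" by (simp add: Pn.emeasure_eq_measure)
  have "measure ?Pn S = measure (completion ?Pn) S" using SN(4) by simp
  also have "\<dots> \<le> measure (completion ?Pn) E2"
    using SN(1) SN(4) E2 by (intro cPn.finite_measure_mono) auto
  finally have "(1/2)^n \<le> measure (completion ?Pn) E2" using m2 by linarith
  moreover have "0 \<le> measure (completion ?Pn) E1" by (rule measure_nonneg)
  ultimately have "(1/2)^n \<le> measure (completion ?Pn) E1 + measure (completion ?Pn) E2" by linarith
  then show ?thesis unfolding ee by simp
qed



lemma good_P:
  fixes M :: "'a measure"
  defines "N \<equiv> M \<Otimes>\<^sub>M count_space (UNIV::bool set)"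
  assumes Hm: "H \<subseteq> measurable M (count_space UNIV)" and h: "h \<in> H"
    and x: "x\<in>space M" and x': "x'\<in>space M" and xx: "x\<noteq>x'" and hx: "h x = y"
  shows "is_distribution M (twopt N (x,y) (x',h x')) \<and> realizable H (twopt N (x,y) (x',h x'))"
proof -
  let ?P = "twopt N (x,y) (x',h x')"
  have a: "(x,y) \<in> space N" using x by (auto simp: N_def space_pair_measure)
  have d: "is_distribution M ?P" unfolding is_distribution_def using twopt_prob[OF a] by (simp add: N_def)
  have hm: "h \<in> M \<rightarrow>\<^sub>M count_space UNIV" using Hm h by auto
  have U: "h -` {h z} \<inter> space M \<in> sets M" for z using measurable_sets[OF hm, of "{h z}"] by simp
  have "er ?P h = (if h x \<noteq> y then 1/2 else 0) + (if h x' \<noteq> h x' then 1/2 else 0)"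
    unfolding N_def by (rule er_twopt[OF x x' xx U _ _ U]) (use x x' in auto)
  then have er0: "er ?P h = 0" using hx by simp
  have nn: "\<And>g. 0 \<le> er ?P g" by (simp add: er_def)
  have bdd: "bdd_below ((\<lambda>g. er ?P g) ` H)" using nn by (intro bdd_belowI[where m=0]) auto
  have "(INF g\<in>H. er ?P g) \<le> 0" using cINF_lower[OF bdd h] er0 by simp
  moreover have "0 \<le> (INF g\<in>H. er ?P g)" using h nn by (intro cINF_greatest) auto
  ultimately have "realizable H ?P" unfolding realizable_def by linarith
  with d show ?thesis by simp
qed

lemma find_pair:
  fixes M :: "'a measure" and H :: "('a \<Rightarrow> bool) set"
  assumes "H \<subseteq> extensional (space M)" and "infinite H \<or> card H > 2"
  shows "\<exists>h1\<in>H. \<exists>h2\<in>H. \<exists>x\<in>space M. \<exists>x'\<in>space M. h1 x = h2 x \<and> h1 x' \<noteq> h2 x'"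
proof -
  have diff: "\<exists>z\<in>space M. f z \<noteq> g z" if "f \<in> H" "g \<in> H" "f \<noteq> g" for f g
  proof (rule ccontr)
    assume "\<not> ?thesis"
    then have "f = g" using that assms(1) by (intro extensionalityI[of _ "space M"]) auto
    with that show False by simp
  qed
  obtain a b c where abc: "a \<in> H" "b \<in> H" "c \<in> H" "a \<noteq> b" "a \<noteq> c" "b \<noteq> c"
    using three[OF assms(2)] by blast
  obtain x' where x': "x' \<in> space M" "a x' \<noteq> b x'" using diff abc by blast
  show ?thesis
  proof (cases "c x' = a x'")
    case True
    obtain x where x: "x \<in> space M" "a x \<noteq> c x" using diff abc by blast
    show ?thesis
    proof (cases "b x = a x")
      case True then show ?thesis using abc x x' by metis
    next
      case False
      then have "b x = c x" using x by auto
      moreover have "b x' \<noteq> c x'" using \<open>c x' = a x'\<close> x' by auto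
      ultimately show ?thesis using abc x x' by metis
    qed
  next
    case False
    then have cb: "c x' = b x'" using x' by auto
    obtain x where x: "x \<in> space M" "b x \<noteq> c x" using diff abc by blast
    show ?thesis
    proof (cases "a x = b x")
      case True then show ?thesis using abc x x' by metis
    next
      case False
      then have "a x = c x" using x by auto
      moreover have "a x' \<noteq> c x'" using cb x' by auto
      ultimately show ?thesis using abc x x' by metis
    qed
  qed
qed

theorem mainTheorem7:
  fixes M :: "'a measure" and H :: "('a \<Rightarrow> bool) set"
  assumes "H \<subseteq> measurable M (count_space UNIV)"
    and "H \<subseteq> extensional (space M)"
    and "infinite H \<or> card H > 2"
  shows "(\<forall>A. learning_algorithm M A \<longrightarrow>
            (\<exists>P. is_distribution M P \<and> realizable H P \<and>
               (\<exists>\<^sub>\<infinity>n. expected_error P A n \<ge> 2 powr (- real n - 2))))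
         \<and> not_learnable_faster M H (\<lambda>t. exp (- t))"
proof -
  obtain h1 h2 x x' where h: "h1 \<in> H" "h2 \<in> H" "x \<in> space M" "x' \<in> space M" "h1 x = h2 x" "h1 x' \<noteq> h2 x'"
    using find_pair[OF assms(2,3)] by blast
  have xx: "x \<noteq> x'" using h by auto
  define N where "N = M \<Otimes>\<^sub>M count_space (UNIV::bool set)"
  define y where "y = h1 x"
  have g1: "is_distribution M (twopt N (x,y) (x',h1 x')) \<and> realizable H (twopt N (x,y) (x',h1 x'))"
    unfolding N_def by (rule good_P[OF assms(1) h(1) h(3) h(4) xx]) (simp add: y_def)
  have g2: "is_distribution M (twopt N (x,y) (x',h2 x')) \<and> realizable H (twopt N (x,y) (x',h2 x'))"
    unfolding N_def by (rule good_P[OF assms(1) h(2) h(3) h(4) xx]) (simp add: y_def h(5))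
  have part1: "\<exists>P. is_distribution M P \<and> realizable H P \<and>
               (\<exists>\<^sub>\<infinity>n. expected_error P A n \<ge> 2 powr (- real n - 2))"
    if lm: "learning_algorithm M A" for A
  proof -
    define bb where "bb n = A n (\<lambda>i\<in>{..<n}. (x,y)) x'" for n
    have lower: "2 powr (- real n - 2) \<le> expected_error (twopt N (x,y) (x',y')) A n"
      if "bb n \<noteq> y'" for n y'
    proof -
      have "(1/2)^(Suc n) \<le> expected_error (twopt N (x,y) (x',y')) A n"
        unfolding N_def by (rule main_lower[OF lm h(3) h(4) xx]) (use that in \<open>simp add: bb_def\<close>)
      then show ?thesis using pw1[of n] by linarith
    qed
    show ?thesis
    proof (cases "infinite {n. bb n \<noteq> h1 x'}")
      case True
      then have "\<exists>\<^sub>\<infinity>n. bb n \<noteq> h1 x'" by (simp add: INFM_iff_infinite)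
      then have "\<exists>\<^sub>\<infinity>n. expected_error (twopt N (x,y) (x',h1 x')) A n \<ge> 2 powr (- real n - 2)"
        by (rule frequently_elim1) (rule lower)
      then show ?thesis using g1 by blast
    next
      case False
      then have ev: "eventually (\<lambda>n. bb n = h1 x') cofinite" by (simp add: eventually_cofinite)
      have "(cofinite :: nat filter) \<noteq> bot" by (simp add: cofinite_eq_sequentially)
      from eventually_frequently[OF this ev] have "\<exists>\<^sub>\<infinity>n. bb n = h1 x'" .
      then have "\<exists>\<^sub>\<infinity>n. expected_error (twopt N (x,y) (x',h2 x')) A n \<ge> 2 powr (- real n - 2)"
        by (rule frequently_elim1) (rule lower, use h(6) in auto)
      then show ?thesis using g2 by blast
    qed
  qed
  have part2: "not_learnable_faster M H (\<lambda>t. exp (- t))"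
    unfolding not_learnable_faster_def
  proof (intro allI impI)
    fix A assume "learning_algorithm M A"
    from part1[OF this] obtain P where P: "is_distribution M P" "realizable H P"
      "\<exists>\<^sub>\<infinity>n. expected_error P A n \<ge> 2 powr (- real n - 2)" by blast
    have "\<exists>\<^sub>\<infinity>n. expected_error P A n \<ge> 1/4 * exp (- (ln 2 * real n))"
      using P(3) by (rule frequently_elim1) (simp only: pw2)
    moreover have "(0::real) < ln 2" "(0::real) < 1/4" by simp_all
    ultimately have "\<exists>C>0. \<exists>c>0. \<exists>\<^sub>\<infinity>n. expected_error P A n \<ge> C * exp (- (c * real n))"
      by blast
    with P show "\<exists>P. is_distribution M P \<and> realizable H P \<and>
           (\<exists>C>0. \<exists>c>0. \<exists>\<^sub>\<infinity>n. expected_error P A n \<ge> C * exp (- (c * real n)))" by blast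
  qed
  show ?thesis using part1 part2 by blast
qed


end
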